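(* For every $0<\alpha<\varepsilon<\frac{1}{2\omega}$ and every $z\in\mathbf H$, $$\Lambda_\alpha(z)\le\frac{\Lambda_\varepsilon(z)}{1-\omega\varepsilon}\le\frac{\Lambda_\alpha(z)}{1-2\omega\varepsilon}.$$
   Context: Let $\mathfrak I=(a,b)\subset\mathbb R$ be a bounded interval, $\mathcal H=L^2(\mathfrak I)$ with inner product $\langle\cdot,\cdot\rangle$ and norm $\|\cdot\|$. Let $A=-\partial_{xx}$ with domain $H^2(\mathfrak I)\cap H^1_0(\mathfrak I)$, $\lambda_1>0$ its first eigenvalue, $\mathcal H^r=D(A^{r/2})$, $\|u\|_r=\|A^{r/2}u\|$, $B=I+A$, and on $\mathcal H^r$ the inner product $(u,v)_r=\langle A^{(r-1)/2}B^{1/2}u,A^{(r-1)/2}B^{1/2}v\rangle$ with norm $|||u|||_r^2=\|u\|_{r-1}^2+\|u\|_r^2$. Set $\omega=\sqrt{(1+\lambda_1)/\lambda_1}$. Let $\mu:(0,\infty)\to[0,\infty)$, $\mu\not\equiv0$, nonincreasing, absolutely continuous, with $\kappa:=\int_0^\infty\mu(s)\,ds\in(0,\infty)$, $\int_0^\infty s\mu(s)\,ds=1$, $\lim_{s\to0^+}\mu(s)<\infty$, and $\mu'+\delta\mu\le0$ a.e. for some $\delta>0$. $\mathcal M=L^2_\mu(\mathbb R^+;\mathcal H^1)$ with norm $\|\eta\|_{\mathcal M}^2=\int_0^\infty\mu(s)\|\eta(s)\|_1^2ds$; $\mathbf H=\mathcal H^1\times\mathcal M$ with $\|(u,\eta)\|_{\mathbf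 H}^2=|||u|||_1^2+\|\eta\|_{\mathcal M}^2$. Given $f\in L^2(\mathfrak I)$, let $F(x)=\int_a^xf(y)\,dy$, and for $\varepsilon>0$ and $z=(u,\eta)\in\mathbf H$ define $$\Lambda_\varepsilon(z)=\|z\|_{\mathbf H}^2+\frac2\kappa\int_0^\infty\mu(s)\langle F,\eta_x(s)\rangle\,ds+\frac2\kappa\|F\|^2-\frac{\varepsilon}{\sqrt\kappa}\int_0^\infty\mu(s)(u,\eta(s))_1\,ds.$$ *)

theory Defs
  imports "HOL-Analysis.Analysis"
begin

text \<open>Concrete setting on the bounded interval (a,b): real-valued functions
  real => real are used as representatives of elements of L2(a,b).\<close>

definition L2 :: "real \<Rightarrow> real \<Rightarrow> (real \<Rightarrow> real) \<Rightarrow> bool" where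
  "L2 a b u \<longleftrightarrow> u \<in> borel_measurable (lebesgue_on {a<..<b})
      \<and> integrable (lebesgue_on {a<..<b}) (\<lambda>x. (u x)^2)"

definition ip :: "real \<Rightarrow> real \<Rightarrow> (real \<Rightarrow> real) \<Rightarrow> (real \<Rightarrow> real) \<Rightarrow> real" where
  "ip a b u v = integral\<^sup>L (lebesgue_on {a<..<b}) (\<lambda>x. u x * v x)"

definition prim :: "real \<Rightarrow> (real \<Rightarrow> real) \<Rightarrow> real \<Rightarrow> real" where
  "prim a g x = integral\<^sup>L (lebesgue_on {a<..x}) g"

text \<open>g is the (weak) derivative of u in H1(a,b): u is a.e. equal to an
  absolutely continuous function c + int_a^x g with g in L2.\<close>
definition has_wderiv :: "real \<Rightarrow> real \<Rightarrow> (real \<Rightarrow> real) \<Rightarrow> (real \<Rightarrow> real) \<Rightarrow> bool" where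
  "has_wderiv a b u g \<longleftrightarrow> L2 a b g \<and>
     (\<exists>c. AE x in lebesgue_on {a<..<b}. u x = c + prim a g x)"

definition H1 :: "real \<Rightarrow> real \<Rightarrow> (real \<Rightarrow> real) \<Rightarrow> bool" where
  "H1 a b u \<longleftrightarrow> (\<exists>g. has_wderiv a b u g)"

text \<open>H1_0(a,b): H1 functions vanishing at both endpoints.\<close>
definition H10 :: "real \<Rightarrow> real \<Rightarrow> (real \<Rightarrow> real) \<Rightarrow> bool" where
  "H10 a b u \<longleftrightarrow> (\<exists>g. L2 a b g \<and> integral\<^sup>L (lebesgue_on {a<..<b}) g = 0 \<and>
     (AE x in lebesgue_on {a<..<b}. u x = prim a g x))"

text \<open>Weak derivative u_x (determined up to null sets).\<close>
definition wd :: "real \<Rightarrow> real \<Rightarrow> (real \<Rightarrow> real) \<Rightarrow> (real \<Rightarrow> real)" where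
  "wd a b u = (SOME g. has_wderiv a b u g)"

text \<open>Domain of A = -d^2/dx^2: H2 intersected with H1_0.\<close>
definition domA :: "real \<Rightarrow> real \<Rightarrow> (real \<Rightarrow> real) \<Rightarrow> bool" where
  "domA a b u \<longleftrightarrow> H10 a b u \<and> H1 a b (wd a b u)"

definition opA :: "real \<Rightarrow> real \<Rightarrow> (real \<Rightarrow> real) \<Rightarrow> (real \<Rightarrow> real)" where
  "opA a b u = (\<lambda>x. - wd a b (wd a b u) x)"

definition is_eigenvalue_A :: "real \<Rightarrow> real \<Rightarrow> real \<Rightarrow> bool" where
  "is_eigenvalue_A a b l \<longleftrightarrow> (\<exists>u. domA a b u \<and>
      \<not> (AE x in lebesgue_on {a<..<b}. u x = 0) \<and>
      (AE x in lebesgue_on {a<..<b}. opA a b u x = l * u x))"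

definition lambda1 :: "real \<Rightarrow> real \<Rightarrow> real" where
  "lambda1 a b = Inf {l. is_eigenvalue_A a b l}"

definition omega :: "real \<Rightarrow> real \<Rightarrow> real" where
  "omega a b = sqrt ((1 + lambda1 a b) / lambda1 a b)"

text \<open>||u||_1 = ||A^(1/2) u|| = ||u_x|| on H1 = D(A^(1/2)) = H1_0.\<close>
definition norm1 :: "real \<Rightarrow> real \<Rightarrow> (real \<Rightarrow> real) \<Rightarrow> real" where
  "norm1 a b u = sqrt (ip a b (wd a b u) (wd a b u))"

text \<open>(u,v)_1 = <B^(1/2)u, B^(1/2)v> = <u,v> + <u_x,v_x>.\<close>
definition ip1 :: "real \<Rightarrow> real \<Rightarrow> (real \<Rightarrow> real) \<Rightarrow> (real \<Rightarrow> real) \<Rightarrow> real" where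
  "ip1 a b u v = ip a b u v + ip a b (wd a b u) (wd a b v)"

definition tnorm1_sq :: "real \<Rightarrow> real \<Rightarrow> (real \<Rightarrow> real) \<Rightarrow> real" where
  "tnorm1_sq a b u = ip a b u u + (norm1 a b u)^2"

text \<open>Memory space M = L2_mu(R+; H1). Strong measurability is expressed through
  weak measurability (Pettis; H1 is separable).\<close>
definition inM :: "real \<Rightarrow> real \<Rightarrow> (real \<Rightarrow> real) \<Rightarrow> (real \<Rightarrow> real \<Rightarrow> real) \<Rightarrow> bool" where
  "inM a b \<mu> \<eta> \<longleftrightarrow>
     (AE s in lebesgue_on {0<..}. H10 a b (\<eta> s)) \<and>
     (\<forall>v. H10 a b v \<longrightarrow> (\<lambda>s. ip1 a b v (\<eta> s)) \<in> borel_measurable (lebesgue_on {0<..})) \<and>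
     integrable (lebesgue_on {0<..}) (\<lambda>s. \<mu> s * (norm1 a b (\<eta> s))^2)"

definition normM_sq :: "real \<Rightarrow> real \<Rightarrow> (real \<Rightarrow> real) \<Rightarrow> (real \<Rightarrow> real \<Rightarrow> real) \<Rightarrow> real" where
  "normM_sq a b \<mu> \<eta> = integral\<^sup>L (lebesgue_on {0<..}) (\<lambda>s. \<mu> s * (norm1 a b (\<eta> s))^2)"

definition inH :: "real \<Rightarrow> real \<Rightarrow> (real \<Rightarrow> real) \<Rightarrow> (real \<Rightarrow> real) \<times> (real \<Rightarrow> real \<Rightarrow> real) \<Rightarrow> bool" where
  "inH a b \<mu> z \<longleftrightarrow> H10 a b (fst z) \<and> inM a b \<mu> (snd z)"

definition normH_sq :: "real \<Rightarrow> real \<Rightarrow> (real \<Rightarrow> real) \<Rightarrow> (real \<Rightarrow> real) \<times> (real \<Rightarrow> real \<Rightarrow> real) \<Rightarrow> real" where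
  "normH_sq a b \<mu> z = tnorm1_sq a b (fst z) + normM_sq a b \<mu> (snd z)"

definition kappa :: "(real \<Rightarrow> real) \<Rightarrow> real" where
  "kappa \<mu> = integral\<^sup>L (lebesgue_on {0<..}) \<mu>"

definition Lambda :: "real \<Rightarrow> real \<Rightarrow> (real \<Rightarrow> real) \<Rightarrow> (real \<Rightarrow> real) \<Rightarrow> real
    \<Rightarrow> (real \<Rightarrow> real) \<times> (real \<Rightarrow> real \<Rightarrow> real) \<Rightarrow> real" where
  "Lambda a b f \<mu> \<epsilon> z =
     (let F = prim a f; u = fst z; \<eta> = snd z; \<kappa> = kappa \<mu> in
      normH_sq a b \<mu> z
      + 2 / \<kappa> * integral\<^sup>L (lebesgue_on {0<..}) (\<lambda>s. \<mu> s * ip a b F (wd a b (\<eta> s)))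
      + 2 / \<kappa> * ip a b F F
      - \<epsilon> / sqrt \<kappa> * integral\<^sup>L (lebesgue_on {0<..}) (\<lambda>s. \<mu> s * ip1 a b u (\<eta> s)))"

definition abs_cont_pos :: "(real \<Rightarrow> real) \<Rightarrow> bool" where
  "abs_cont_pos g \<longleftrightarrow> (\<forall>e>0. \<exists>d>0. \<forall>(n::nat) (l::nat \<Rightarrow> real) r.
      (\<forall>i<n. 0 < l i \<and> l i \<le> r i) \<and>
      (\<forall>i<n. \<forall>j<n. i \<noteq> j \<longrightarrow> {l i<..<r i} \<inter> {l j<..<r j} = {}) \<and>
      (\<Sum>i<n. r i - l i) < d \<longrightarrow> (\<Sum>i<n. \<bar>g (r i) - g (l i)\<bar>) < e)"

end

theory Submission
  imports Defs
begin



lemma sigma_finite_lebesgue: "sigma_finite_measure (lebesgue :: real measure)"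
proof
  show "\<exists>A. countable A \<and> A \<subseteq> sets lebesgue \<and> \<Union> A = space (lebesgue::real measure) \<and> (\<forall>a\<in>A. emeasure lebesgue a \<noteq> \<infinity>)"
  proof (intro exI[of _ "range (\<lambda>n::nat. {-real n..real n})"] conjI)
    show "\<Union> (range (\<lambda>n::nat. {-real n..real n})) = space lebesgue"
    proof (auto)
      fix x :: real
      obtain n :: nat where "\<bar>x\<bar> \<le> real n" using real_arch_simple by blast
      then show "\<exists>n. - real n \<le> x \<and> x \<le> real n" by (intro exI[of _ n]) auto
    qed
  qed auto
qed

lemma pair_leb: "pair_sigma_finite (lebesgue :: real measure) (lebesgue :: real measure)"
  unfolding pair_sigma_finite_def using sigma_finite_lebesgue by simp

lemma ae_measurable_transfer:
  fixes f g :: "real \<Rightarrow> real"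
  assumes "f \<in> borel_measurable (lebesgue_on S)" "S \<in> sets lebesgue"
    and "AE x in lebesgue_on S. f x = g x"
  shows "g \<in> borel_measurable (lebesgue_on S)"
proof -
  have 1: "(\<lambda>x. indicator S x * f x) \<in> borel_measurable lebesgue"
    using assms(1,2) by (simp add: borel_measurable_restrict_space_iff)
  have "AE x in lebesgue. x \<in> S \<longrightarrow> f x = g x"
    using assms(3) assms(2) by (simp add: AE_restrict_space_iff)
  then have "AE x in lebesgue. indicator S x * f x = indicator S x * g x"
    by eventually_elim (auto simp: indicator_def)
  then have "(\<lambda>x. indicator S x * g x) \<in> borel_measurable lebesgue"
    by (rule borel_measurable_AE[OF 1])
  then show ?thesis using assms(2) by (simp add: borel_measurable_restrict_space_iff)
qed



lemma amgm_real: fixes x y t :: real assumes "t > 0"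
  shows "2 * \<bar>x * y\<bar> \<le> t * x^2 + y^2 / t"
proof -
  have "0 \<le> (t * \<bar>x\<bar> - \<bar>y\<bar>)^2 / t" using assms by simp
  also have "(t * \<bar>x\<bar> - \<bar>y\<bar>)^2 / t = t * x^2 + y^2 / t - 2 * \<bar>x * y\<bar>"
    using assms by (simp add: power2_eq_square field_simps abs_mult)
  finally show ?thesis by simp
qed

lemma fin_Ioo: "finite_measure (lebesgue_on {a<..<b::real})"
  by (rule finite_measure_lebesgue_on) simp

lemma L2_meas: "L2 a b u \<Longrightarrow> u \<in> borel_measurable (lebesgue_on {a<..<b})"
  by (simp add: L2_def)

lemma L2_prod_int:
  assumes "L2 a b u" "L2 a b v"
  shows "integrable (lebesgue_on {a<..<b}) (\<lambda>x. u x * v x)"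
proof (rule Bochner_Integration.integrable_bound[where f="\<lambda>x. (u x)^2 + (v x)^2"])
  show "integrable (lebesgue_on {a<..<b}) (\<lambda>x. (u x)^2 + (v x)^2)" using assms by (auto simp: L2_def)
  show "(\<lambda>x. u x * v x) \<in> borel_measurable (lebesgue_on {a<..<b})" using assms by (auto simp: L2_def)
  show "AE x in lebesgue_on {a<..<b}. norm (u x * v x) \<le> norm ((u x)^2 + (v x)^2)"
  proof (intro AE_I2)
    fix x
    have "2 * \<bar>u x * v x\<bar> \<le> 1 * (u x)^2 + (v x)^2 / 1" by (rule amgm_real) simp
    then show "norm (u x * v x) \<le> norm ((u x)^2 + (v x)^2)" by simp
  qed
qed

lemma L2_int:
  assumes "L2 a b u"
  shows "integrable (lebesgue_on {a<..<b}) u"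
proof (rule Bochner_Integration.integrable_bound[where f="\<lambda>x. 1 + (u x)^2"])
  interpret finite_measure "lebesgue_on {a<..<b}" by (rule fin_Ioo)
  show "integrable (lebesgue_on {a<..<b}) (\<lambda>x. 1 + (u x)^2)" using assms by (auto simp: L2_def)
  show "u \<in> borel_measurable (lebesgue_on {a<..<b})" using assms by (auto simp: L2_def)
  show "AE x in lebesgue_on {a<..<b}. norm (u x) \<le> norm (1 + (u x)^2)"
  proof (intro AE_I2)
    fix x
    have "2 * \<bar>1 * u x\<bar> \<le> 1 * 1^2 + (u x)^2 / 1" by (rule amgm_real) simp
    then show "norm (u x) \<le> norm (1 + (u x)^2)" by simp
  qed
qed

lemma ip_sq_nonneg: "0 \<le> ip a b u u"
  unfolding ip_def by (rule integral_nonneg_AE) simp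

lemma ip_amgm:
  assumes "L2 a b u" "L2 a b v" "t > 0"
  shows "2 * \<bar>ip a b u v\<bar> \<le> t * ip a b u u + ip a b v v / t"
proof -
  let ?M = "lebesgue_on {a<..<b}"
  have iuv: "integrable ?M (\<lambda>x. u x * v x)" by (rule L2_prod_int[OF assms(1,2)])
  have iuu: "integrable ?M (\<lambda>x. u x * u x)" by (rule L2_prod_int[OF assms(1,1)])
  have ivv: "integrable ?M (\<lambda>x. v x * v x)" by (rule L2_prod_int[OF assms(2,2)])
  have "\<bar>ip a b u v\<bar> \<le> integral\<^sup>L ?M (\<lambda>x. \<bar>u x * v x\<bar>)"
    unfolding ip_def by (rule integral_abs_bound)
  also have "\<dots> \<le> integral\<^sup>L ?M (\<lambda>x. (t * (u x * u x) + (v x * v x) / t) / 2)"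
  proof (rule integral_mono)
    show "integrable ?M (\<lambda>x. \<bar>u x * v x\<bar>)" using iuv by simp
    show "integrable ?M (\<lambda>x. (t * (u x * u x) + (v x * v x) / t) / 2)"
      using iuu ivv by auto
    fix x
    show "\<bar>u x * v x\<bar> \<le> (t * (u x * u x) + (v x * v x) / t) / 2"
      using amgm_real[OF assms(3), of "u x" "v x"] by (simp add: power2_eq_square)
  qed
  also have "\<dots> = (t * ip a b u u + ip a b v v / t) / 2"
    unfolding ip_def using iuu ivv by simp
  finally show ?thesis by simp
qed



lemma leb_on_finite_diff:
  fixes f :: "real \<Rightarrow> real"
  assumes X: "finite X" and d: "(A - B) \<union> (B - A) \<subseteq> X" and A: "A \<in> sets lebesgue" and B: "B \<in> sets lebesgue"
  shows "integral\<^sup>L (lebesgue_on A) f = integral\<^sup>L (lebesgue_on B) f"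
    and "integrable (lebesgue_on A) f \<longleftrightarrow> integrable (lebesgue_on B) f"
proof -
  have c: "countable X" using X by (simp add: countable_finite)
  have n: "\<And>x. x \<in> X \<Longrightarrow> emeasure lebesgue {x::real} = 0" by simp
  have s: "\<And>x. x \<in> X \<Longrightarrow> {x::real} \<in> sets lebesgue" by simp
  show "integral\<^sup>L (lebesgue_on A) f = integral\<^sup>L (lebesgue_on B) f"
    using set_integral_discrete_difference[OF c d n s, of f]
    by (simp add: integral_restrict_space A B set_lebesgue_integral_def)
  show "integrable (lebesgue_on A) f \<longleftrightarrow> integrable (lebesgue_on B) f"
    using set_integrable_discrete_difference[OF c d n s, of f]
    by (simp add: integrable_restrict_space A B set_integrable_def)
qed

lemma prim_Icc: "prim a g x = integral\<^sup>L (lebesgue_on {a..x}) g"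
  unfolding prim_def by (rule leb_on_finite_diff(1)[where X="{a}"]) auto

lemma prim_b: "prim a g b = integral\<^sup>L (lebesgue_on {a<..<b}) g"
  unfolding prim_def by (rule leb_on_finite_diff(1)[where X="{b}"]) auto

lemma prim_a: "prim a g a = 0"
  unfolding prim_def by simp

lemma int_Ioo_Icc: "integrable (lebesgue_on {a<..<b}) g \<longleftrightarrow> integrable (lebesgue_on {a..b}) (g::real\<Rightarrow>real)"
  by (rule leb_on_finite_diff(2)[where X="{a,b}"]) auto

lemma int_Ioc_sub:
  assumes "integrable (lebesgue_on {a<..<b}) (g::real\<Rightarrow>real)" "x \<le> b"
  shows "integrable (lebesgue_on {a<..x}) g"
proof (cases "a \<le> x")
  case True
  have "integrable (lebesgue_on {a..b}) g" using assms int_Ioo_Icc by blast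
  then have "integrable (lebesgue_on {a..x}) g"
    by (rule integrable_subinterval) (use assms in auto)
  moreover have "integrable (lebesgue_on {a<..x}) g \<longleftrightarrow> integrable (lebesgue_on {a..x}) g"
    by (rule leb_on_finite_diff(2)[where X="{a}"]) auto
  ultimately show ?thesis by simp
next
  case False
  then show ?thesis by simp
qed

lemma prim_cont:
  assumes "integrable (lebesgue_on {a<..<b}) (g::real\<Rightarrow>real)"
  shows "continuous_on {a..b} (prim a g)"
proof -
  have "integrable (lebesgue_on {a..b}) g" using assms int_Ioo_Icc by blast
  from indefinite_integral_continuous_real[OF this]
  show ?thesis by (simp add: prim_Icc[abs_def])
qed

lemma prim_ind: "prim a g x = integral\<^sup>L lebesgue (\<lambda>t. indicator {a<..x} t * g t)"
  unfolding prim_def by (simp add: integral_restrict_space)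

lemma prim_add:
  assumes "integrable (lebesgue_on {a<..<b}) g" "integrable (lebesgue_on {a<..<b}) h" "x \<le> b"
  shows "prim a (\<lambda>t. g t + h t) x = prim a g x + prim a h x"
  unfolding prim_def using int_Ioc_sub[OF assms(1,3)] int_Ioc_sub[OF assms(2,3)] by simp

lemma prim_diff:
  assumes "integrable (lebesgue_on {a<..<b}) g" "integrable (lebesgue_on {a<..<b}) h" "x \<le> b"
  shows "prim a (\<lambda>t. g t - h t) x = prim a g x - prim a h x"
  unfolding prim_def using int_Ioc_sub[OF assms(1,3)] int_Ioc_sub[OF assms(2,3)] by simp

lemma prim_cmult: "prim a (\<lambda>t. c * g t) x = c * prim a g x"
  unfolding prim_def by simp



lemma id_leb[measurable]: "(\<lambda>x::real. x) \<in> borel_measurable lebesgue"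
  using id_borel_measurable_lebesgue by (simp add: id_def)

lemma fst_leb[measurable]: "(\<lambda>p::real\<times>real. fst p) \<in> borel_measurable (lebesgue \<Otimes>\<^sub>M lebesgue)"
  by (rule measurable_compose[OF measurable_fst id_leb])
lemma snd_leb[measurable]: "(\<lambda>p::real\<times>real. snd p) \<in> borel_measurable (lebesgue \<Otimes>\<^sub>M lebesgue)"
  by (rule measurable_compose[OF measurable_snd id_leb])

lemma meas_fst: "g \<in> borel_measurable lebesgue \<Longrightarrow> (\<lambda>p::real\<times>real. g (fst p) :: real) \<in> borel_measurable (lebesgue \<Otimes>\<^sub>M lebesgue)"
  by (rule measurable_compose[OF measurable_fst])
lemma meas_snd: "g \<in> borel_measurable lebesgue \<Longrightarrow> (\<lambda>p::real\<times>real. g (snd p) :: real) \<in> borel_measurable (lebesgue \<Otimes>\<^sub>M lebesgue)"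
  by (rule measurable_compose[OF measurable_snd])




lemma prod_int:
  fixes g h :: "real \<Rightarrow> real"
  assumes g: "integrable lebesgue g" and h: "integrable lebesgue h"
  shows "integrable (lebesgue \<Otimes>\<^sub>M lebesgue) (\<lambda>p. g (fst p) * h (snd p))"
proof (rule pair_sigma_finite.Fubini_integrable[OF pair_leb])
  show "(\<lambda>p. g (fst p) * h (snd p)) \<in> borel_measurable (lebesgue \<Otimes>\<^sub>M lebesgue)"
    using meas_fst[OF borel_measurable_integrable[OF g]] meas_snd[OF borel_measurable_integrable[OF h]]
    by (rule borel_measurable_times)
  have "integrable lebesgue (\<lambda>x. \<bar>g x\<bar> * (\<integral>y. \<bar>h y\<bar> \<partial>lebesgue))"
    using g by simp
  then show "integrable lebesgue (\<lambda>x. \<integral>y. norm (g (fst (x, y)) * h (snd (x, y))) \<partial>lebesgue)"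
    by (simp add: abs_mult)
  show "AE x in lebesgue. integrable lebesgue (\<lambda>y. g (fst (x, y)) * h (snd (x, y)))"
    using h by simp
qed

lemma prod_rule_core:
  fixes g h :: "real \<Rightarrow> real" and a x :: real
  assumes g: "integrable lebesgue g" and h: "integrable lebesgue h"
  defines "P \<equiv> \<lambda>x. \<integral>t. indicator {a<..x} t * g t \<partial>lebesgue"
    and "Q \<equiv> \<lambda>x. \<integral>t. indicator {a<..x} t * h t \<partial>lebesgue"
  shows "P x * Q x = (\<integral>t. indicator {a<..x} t * (g t * Q t + P t * h t) \<partial>lebesgue)"
proof -
  have gm: "g \<in> borel_measurable lebesgue" using g by (rule borel_measurable_integrable)
  have hm: "h \<in> borel_measurable lebesgue" using h by (rule borel_measurable_integrable)
  note [measurable] = meas_fst[OF gm] meas_snd[OF hm] gm hm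
  define F1 where "F1 = (\<lambda>t s. indicator {a<..x} t * g t * (indicator {a<..t} s * h s) :: real)"
  define F2 where "F2 = (\<lambda>t s. indicator {a<..x} s * h s * (indicator {a<..<s} t * g t) :: real)"
  have I: "integrable (lebesgue \<Otimes>\<^sub>M lebesgue) (\<lambda>p. g (fst p) * h (snd p))" by (rule prod_int[OF g h])
  have F1i: "integrable (lebesgue \<Otimes>\<^sub>M lebesgue) (case_prod F1)"
  proof (rule Bochner_Integration.integrable_bound[OF I])
    have e: "case_prod F1 = (\<lambda>p. (if a < fst p \<and> fst p \<le> x then 1 else 0) * g (fst p) * ((if a < snd p \<and> snd p \<le> fst p then 1 else 0) * h (snd p)))"
      by (auto simp: F1_def indicator_def fun_eq_iff)
    show "case_prod F1 \<in> borel_measurable (lebesgue \<Otimes>\<^sub>M lebesgue)" unfolding e by measurable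
    show "AE p in lebesgue \<Otimes>\<^sub>M lebesgue. norm (case_prod F1 p) \<le> norm (g (fst p) * h (snd p))"
      by (intro AE_I2) (auto simp: F1_def indicator_def abs_mult)
  qed
  have F2i: "integrable (lebesgue \<Otimes>\<^sub>M lebesgue) (case_prod F2)"
  proof (rule Bochner_Integration.integrable_bound[OF I])
    have e: "case_prod F2 = (\<lambda>p. (if a < snd p \<and> snd p \<le> x then 1 else 0) * h (snd p) * ((if a < fst p \<and> fst p < snd p then 1 else 0) * g (fst p)))"
      by (auto simp: F2_def indicator_def fun_eq_iff)
    show "case_prod F2 \<in> borel_measurable (lebesgue \<Otimes>\<^sub>M lebesgue)" unfolding e by measurable
    show "AE p in lebesgue \<Otimes>\<^sub>M lebesgue. norm (case_prod F2 p) \<le> norm (g (fst p) * h (snd p))"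
      by (intro AE_I2) (auto simp: F2_def indicator_def abs_mult)
  qed
  have A: "(\<integral>s. F1 t s \<partial>lebesgue) = indicator {a<..x} t * g t * Q t" for t
    by (simp add: F1_def Q_def)
  have Ps: "P s = (\<integral>t. indicator {a<..<s} t * g t \<partial>lebesgue)" for s
  proof -
    have "P s = integral\<^sup>L (lebesgue_on {a<..s}) g" unfolding P_def by (simp add: integral_restrict_space)
    also have "\<dots> = integral\<^sup>L (lebesgue_on {a<..<s}) g"
      by (rule leb_on_finite_diff(1)[where X="{s}"]) auto
    also have "\<dots> = (\<integral>t. indicator {a<..<s} t * g t \<partial>lebesgue)" by (simp add: integral_restrict_space)
    finally show ?thesis .
  qed
  have B: "(\<integral>t. F2 t s \<partial>lebesgue) = indicator {a<..x} s * h s * P s" for s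
    by (simp add: F2_def Ps)
  have iA: "integrable lebesgue (\<lambda>t. indicator {a<..x} t * g t * Q t)"
    using pair_sigma_finite.integrable_fst[OF pair_leb F1i] by (simp add: A)
  have iB: "integrable lebesgue (\<lambda>s. indicator {a<..x} s * h s * P s)"
    using pair_sigma_finite.integrable_snd[OF pair_leb F2i] by (simp add: B)
  have inner1: "integrable lebesgue (\<lambda>s. F1 t s)" for t
    unfolding F1_def using integrable_real_mult_indicator[OF _ h, of "{a<..t}"] by (simp add: mult.commute)
  have inner2: "integrable lebesgue (\<lambda>s. F2 t s)" for t
  proof (rule Bochner_Integration.integrable_bound[where f="\<lambda>s. g t * h s"])
    show "integrable lebesgue (\<lambda>s. g t * h s)" using h by simp
    have e: "(\<lambda>s. F2 t s) = (\<lambda>s. (if a < s \<and> s \<le> x then 1 else 0) * h s * ((if a < t \<and> t < s then 1 else 0) * g t))"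
      by (auto simp: F2_def indicator_def fun_eq_iff)
    show "(\<lambda>s. F2 t s) \<in> borel_measurable lebesgue" unfolding e by measurable
    show "AE s in lebesgue. norm (F2 t s) \<le> norm (g t * h s)"
      by (intro AE_I2) (auto simp: F2_def indicator_def abs_mult)
  qed
  have sum: "F1 t s + F2 t s = indicator {a<..x} t * g t * (indicator {a<..x} s * h s)" for t s
    by (auto simp: F1_def F2_def indicator_def)
  have "(\<integral>t. indicator {a<..x} t * (g t * Q t + P t * h t) \<partial>lebesgue)
      = (\<integral>t. indicator {a<..x} t * g t * Q t \<partial>lebesgue) + (\<integral>s. indicator {a<..x} s * h s * P s \<partial>lebesgue)"
    using iA iB by (simp add: algebra_simps)
  also have "\<dots> = (\<integral>t. (\<integral>s. F1 t s \<partial>lebesgue) \<partial>lebesgue) + (\<integral>s. (\<integral>t. F2 t s \<partial>lebesgue) \<partial>lebesgue)"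
    by (simp add: A B)
  also have "(\<integral>s. (\<integral>t. F2 t s \<partial>lebesgue) \<partial>lebesgue) = (\<integral>t. (\<integral>s. F2 t s \<partial>lebesgue) \<partial>lebesgue)"
    by (rule pair_sigma_finite.Fubini_integral[OF pair_leb F2i])
  also have "(\<integral>t. (\<integral>s. F1 t s \<partial>lebesgue) \<partial>lebesgue) + (\<integral>t. (\<integral>s. F2 t s \<partial>lebesgue) \<partial>lebesgue)
      = (\<integral>t. (\<integral>s. F1 t s \<partial>lebesgue) + (\<integral>s. F2 t s \<partial>lebesgue) \<partial>lebesgue)"
    using pair_sigma_finite.integrable_fst[OF pair_leb F1i] pair_sigma_finite.integrable_fst[OF pair_leb F2i] by simp
  also have "\<dots> = (\<integral>t. (\<integral>s. F1 t s + F2 t s \<partial>lebesgue) \<partial>lebesgue)"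
    using inner1 inner2 by simp
  also have "\<dots> = (\<integral>t. indicator {a<..x} t * g t * Q x \<partial>lebesgue)"
    unfolding sum Q_def by simp
  also have "\<dots> = P x * Q x" unfolding P_def by (simp add: mult.commute)
  finally show ?thesis by simp
qed



lemma prim_ext:
  assumes "x \<le> b"
  shows "prim a f x = (\<integral>t. indicator {a<..x} t * (indicator {a<..<b} t * f t) \<partial>lebesgue)"
proof -
  have "prim a f x = integral\<^sup>L (lebesgue_on ({a<..x} \<inter> {a<..<b})) f"
    unfolding prim_def by (rule leb_on_finite_diff(1)[where X="{b}"]) (use assms in auto)
  also have "\<dots> = (\<integral>t. indicator ({a<..x} \<inter> {a<..<b}) t * f t \<partial>lebesgue)"
    by (simp add: integral_restrict_space)
  finally show ?thesis by (simp add: indicator_inter_arith mult.assoc)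
qed

lemma int_ext: fixes a b :: real shows "integrable (lebesgue_on {a<..<b}) f \<Longrightarrow> integrable lebesgue (\<lambda>t. indicator {a<..<b} t * (f t::real))"
  by (subst (asm) integrable_restrict_space) auto

lemma prod_rule:
  assumes g: "integrable (lebesgue_on {a<..<b}) g" and h: "integrable (lebesgue_on {a<..<b}) h" and x: "x \<le> b"
  shows "prim a g x * prim a h x = prim a (\<lambda>t. g t * prim a h t + prim a g t * h t) x"
proof -
  define ge where "ge = (\<lambda>t. indicator {a<..<b} t * g t)"
  define he where "he = (\<lambda>t. indicator {a<..<b} t * h t)"
  define P where "P = (\<lambda>x. \<integral>t. indicator {a<..x} t * ge t \<partial>lebesgue)"
  define Q where "Q = (\<lambda>x. \<integral>t. indicator {a<..x} t * he t \<partial>lebesgue)"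
  have geI: "integrable lebesgue ge" unfolding ge_def by (rule int_ext[OF g])
  have heI: "integrable lebesgue he" unfolding he_def by (rule int_ext[OF h])
  have Pp: "prim a g t = P t" if "t \<le> b" for t unfolding P_def ge_def by (rule prim_ext[OF that])
  have Qp: "prim a h t = Q t" if "t \<le> b" for t unfolding Q_def he_def by (rule prim_ext[OF that])
  have "prim a g x * prim a h x = P x * Q x" using Pp Qp x by simp
  also have "\<dots> = (\<integral>t. indicator {a<..x} t * (ge t * Q t + P t * he t) \<partial>lebesgue)"
    unfolding P_def Q_def by (rule prod_rule_core[OF geI heI])
  also have "\<dots> = (\<integral>t. indicator {a<..x} t * (indicator {a<..<b} t * (g t * prim a h t + prim a g t * h t)) \<partial>lebesgue)"
  proof (rule Bochner_Integration.integral_cong[OF refl])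
    fix t
    show "indicator {a<..x} t * (ge t * Q t + P t * he t) = indicator {a<..x} t * (indicator {a<..<b} t * (g t * prim a h t + prim a g t * h t))"
    proof (cases "t \<in> {a<..<b}")
      case True
      then have "t \<le> b" by simp
      then show ?thesis using True Pp Qp by (simp add: ge_def he_def algebra_simps)
    qed (simp add: ge_def he_def)
  qed
  also have "\<dots> = prim a (\<lambda>t. g t * prim a h t + prim a g t * h t) x"
    by (rule prim_ext[OF x, symmetric])
  finally show ?thesis .
qed

lemma prim_FTC:
  fixes F f :: "real \<Rightarrow> real"
  assumes ax: "a \<le> x" and d: "\<And>t. t \<in> {a..x} \<Longrightarrow> (F has_real_derivative f t) (at t)"
    and c: "continuous_on {a..x} f"
  shows "prim a f x = F x - F a"
proof -
  have "prim a f x = integral\<^sup>L (lebesgue_on {a..x}) f" by (rule prim_Icc)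
  also have "\<dots> = integral {a..x} f"
    by (rule lebesgue_integral_eq_integral[OF continuous_imp_integrable_real[OF c]]) simp
  also have "\<dots> = F x - F a"
  proof (rule integral_unique, rule fundamental_theorem_of_calculus[OF ax])
    fix t assume "t \<in> {a..x}"
    then show "(F has_vector_derivative f t) (at t within {a..x})"
      using d has_real_derivative_iff_has_vector_derivative has_vector_derivative_at_within by blast
  qed
  finally show ?thesis .
qed



lemma prim_zero_closure:
  assumes ab: "a < b" and d: "integrable (lebesgue_on {a<..<b}) d"
    and z: "\<And>x. x \<in> {a<..<b} \<Longrightarrow> prim a d x = c"
    and x: "x \<in> {a..b}"
  shows "prim a d x = c"
proof -
  have "continuous_on (closure {a<..<b}) (prim a d)" using prim_cont[OF d] ab by simp
  from continuous_constant_on_closure[OF this z] x ab show ?thesis by simp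
qed

lemma ae_zero_of_prim_zero:
  fixes d :: "real \<Rightarrow> real"
  assumes ab: "a < b" and d: "integrable (lebesgue_on {a<..<b}) d"
    and z: "\<And>x. x \<in> {a<..<b} \<Longrightarrow> prim a d x = 0"
  shows "AE x in lebesgue_on {a<..<b}. d x = 0"
proof -
  define e where "e = (\<lambda>t. indicator {a<..<b} t * d t)"
  have eI: "integrable lebesgue e" unfolding e_def by (rule int_ext[OF d])
  have z2: "prim a d x = 0" if "x \<in> {a..b}" for x by (rule prim_zero_closure[OF ab d z that])
  have lo: "(\<integral>t. indicator {..x} t * e t \<partial>lebesgue) = 0" for x
  proof (cases "x < a")
    case True
    then have "(\<lambda>t. indicator {..x} t * e t) = (\<lambda>t. 0)"
      by (auto simp: e_def indicator_def fun_eq_iff)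
    then show ?thesis by simp
  next
    case False
    define y where "y = min x b"
    have y: "y \<in> {a..b}" using False ab by (auto simp: y_def)
    have "(\<lambda>t. indicator {..x} t * e t) = (\<lambda>t. indicator {a<..y} t * (indicator {a<..<b} t * d t))"
      using False by (auto simp: e_def indicator_def fun_eq_iff y_def)
    then have "(\<integral>t. indicator {..x} t * e t \<partial>lebesgue) = prim a d y"
      using prim_ext[of y b a d] y by simp
    then show ?thesis using z2[OF y] by simp
  qed
  have tot: "(\<integral>t. e t \<partial>lebesgue) = 0"
  proof -
    have "(\<lambda>t. indicator {..b} t * e t) = e" by (auto simp: e_def indicator_def fun_eq_iff)
    then show ?thesis using lo[of b] by simp
  qed
  have hi: "(\<integral>t. indicator {x<..} t * e t \<partial>lebesgue) = 0" for x
  proof -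
    have "(\<lambda>t. indicator {x<..} t * e t) = (\<lambda>t. e t - indicator {..x} t * e t)"
      by (auto simp: indicator_def fun_eq_iff)
    moreover have "integrable lebesgue (\<lambda>t. indicator {..x} t * e t)"
      using integrable_real_mult_indicator[OF _ eI, of "{..x}"] by (simp add: mult.commute)
    ultimately show ?thesis using eI tot lo[of x] by simp
  qed
  have em: "e \<in> borel_measurable (completion lborel)"
    using borel_measurable_integrable[OF eI] by simp
  obtain e' where e'm: "e' \<in> borel_measurable lborel" and ee': "AE t in lborel. e t = e' t"
    using completion_ex_borel_measurable_real[OF em] by blast
  have ee'L: "AE t in lebesgue. e t = e' t" using AE_completion[OF ee'] by simp
  have e'I: "integrable lborel e'"
  proof -
    have "integrable lebesgue e'" using integrable_cong_AE_imp[OF eI _ ee'L] e'm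
      by (simp add: measurable_completion)
    then show ?thesis using integrable_completion[OF e'm] by simp
  qed
  have hi': "(\<integral>t. indicator {x<..} t * e' t \<partial>lborel) = 0" for x
  proof -
    have "(\<integral>t. indicator {x<..} t * e' t \<partial>lborel) = (\<integral>t. indicator {x<..} t * e' t \<partial>lebesgue)"
      by (rule integral_completion[symmetric]) (use e'm in simp)
    also have "\<dots> = (\<integral>t. indicator {x<..} t * e t \<partial>lebesgue)"
    proof (rule integral_cong_AE)
      show "(\<lambda>t. indicator {x<..} t * e' t) \<in> borel_measurable lebesgue"
        using e'm by (simp add: measurable_completion)
      show "(\<lambda>t. indicator {x<..} t * e t) \<in> borel_measurable lebesgue"
        using borel_measurable_integrable[OF eI] by simp
      show "AE t in lebesgue. indicator {x<..} t * e' t = indicator {x<..} t * e t"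
        using ee'L by eventually_elim simp
    qed
    finally show ?thesis using hi[of x] by simp
  qed
  define p where "p = (\<lambda>t. ennreal (max 0 (e' t)))"
  define q where "q = (\<lambda>t. ennreal (max 0 (- e' t)))"
  have pm: "p \<in> borel_measurable lborel" unfolding p_def using e'm by simp
  have qm: "q \<in> borel_measurable lborel" unfolding q_def using e'm by simp
  have pI: "integrable lborel (\<lambda>t. indicator {x<..} t * max 0 (e' t))" for x
    using integrable_real_mult_indicator[of "{x<..}" lborel "\<lambda>t. max 0 (e' t)"] e'I by (simp add: mult.commute)
  have qI: "integrable lborel (\<lambda>t. indicator {x<..} t * max 0 (- e' t))" for x
    using integrable_real_mult_indicator[of "{x<..}" lborel "\<lambda>t. max 0 (- e' t)"] e'I by (simp add: mult.commute)
  have emp: "emeasure (density lborel p) {x<..} = ennreal (\<integral>t. indicator {x<..} t * max 0 (e' t) \<partial>lborel)" for x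
  proof -
    have "emeasure (density lborel p) {x<..} = (\<integral>\<^sup>+t. p t * indicator {x<..} t \<partial>lborel)"
      by (rule emeasure_density[OF pm]) simp
    also have "\<dots> = (\<integral>\<^sup>+t. ennreal (indicator {x<..} t * max 0 (e' t)) \<partial>lborel)"
      by (auto simp: p_def indicator_def intro!: nn_integral_cong)
    also have "\<dots> = ennreal (\<integral>t. indicator {x<..} t * max 0 (e' t) \<partial>lborel)"
      by (rule nn_integral_eq_integral[OF pI]) simp
    finally show ?thesis .
  qed
  have emq: "emeasure (density lborel q) {x<..} = ennreal (\<integral>t. indicator {x<..} t * max 0 (- e' t) \<partial>lborel)" for x
  proof -
    have "emeasure (density lborel q) {x<..} = (\<integral>\<^sup>+t. q t * indicator {x<..} t \<partial>lborel)"
      by (rule emeasure_density[OF qm]) simp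
    also have "\<dots> = (\<integral>\<^sup>+t. ennreal (indicator {x<..} t * max 0 (- e' t)) \<partial>lborel)"
      by (auto simp: q_def indicator_def intro!: nn_integral_cong)
    also have "\<dots> = ennreal (\<integral>t. indicator {x<..} t * max 0 (- e' t) \<partial>lborel)"
      by (rule nn_integral_eq_integral[OF qI]) simp
    finally show ?thesis .
  qed
  have eqpq: "(\<integral>t. indicator {x<..} t * max 0 (e' t) \<partial>lborel) = (\<integral>t. indicator {x<..} t * max 0 (- e' t) \<partial>lborel)" for x
  proof -
    have "(\<lambda>t. indicator {x<..} t * e' t) = (\<lambda>t. indicator {x<..} t * max 0 (e' t) - indicator {x<..} t * max 0 (- e' t))"
      by (auto simp: fun_eq_iff max_def algebra_simps)
    then have "(\<integral>t. indicator {x<..} t * e' t \<partial>lborel) = (\<integral>t. indicator {x<..} t * max 0 (e' t) \<partial>lborel) - (\<integral>t. indicator {x<..} t * max 0 (- e' t) \<partial>lborel)"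
      using pI qI by simp
    then show ?thesis using hi'[of x] by simp
  qed
  have "density lborel p = density lborel q"
  proof (rule measure_eqI_lessThan)
    show "sets (density lborel p) = sets borel" "sets (density lborel q) = sets borel" by simp_all
    show "emeasure (density lborel p) {x<..} < \<infinity>" for x using emp[of x] by simp
    show "emeasure (density lborel p) {x<..} = emeasure (density lborel q) {x<..}" for x
      using emp[of x] emq[of x] eqpq[of x] by simp
  qed
  then have "AE t in lborel. p t = q t"
    using sigma_finite_measure.density_unique[OF sigma_finite_lborel pm qm] by blast
  then have "AE t in lborel. e' t = 0"
    by eventually_elim (auto simp: p_def q_def max_def split: if_splits)
  then have "AE t in lebesgue. e' t = 0" using AE_completion by blast
  with ee'L have "AE t in lebesgue. e t = 0" by eventually_elim simp
  then have "AE t in lebesgue. t \<in> {a<..<b} \<longrightarrow> d t = 0"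
    by eventually_elim (auto simp: e_def)
  then show ?thesis by (subst AE_restrict_space_iff) auto
qed



lemma ae_cont_eq:
  fixes F G :: "real \<Rightarrow> real"
  assumes ab: "a < b" and cF: "continuous_on {a..b} F" and cG: "continuous_on {a..b} G"
    and ae: "AE x in lebesgue_on {a<..<b}. F x = G x" and x: "x \<in> {a..b}"
  shows "F x = G x"
proof -
  have cH: "continuous_on {a..b} (\<lambda>y. F y - G y)" using cF cG by (intro continuous_intros)
  define C where "C = {y \<in> {a..b}. F y - G y = 0}"
  have clC: "closed C" unfolding C_def by (rule continuous_closed_preimage_constant[OF cH]) simp
  have "AE y in lebesgue. y \<in> {a<..<b} \<longrightarrow> F y = G y"
    using ae by (subst (asm) AE_restrict_space_iff) auto
  then have "AE y \<in> {a<..<b} in lebesgue. y \<in> C"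
    by eventually_elim (auto simp: C_def)
  then have in_C: "y \<in> C" if "y \<in> {a<..<b}" for y
    using mem_closed_if_AE_lebesgue_open[OF _ clC _ that] by simp
  have "continuous_on (closure {a<..<b}) (\<lambda>y. F y - G y)" using cH ab by simp
  from continuous_constant_on_closure[OF this, of 0 x] in_C x ab
  show ?thesis by (auto simp: C_def)
qed

lemma wderiv_unique:
  assumes ab: "a < b" and h1: "has_wderiv a b u g1" and h2: "has_wderiv a b u g2"
  shows "AE x in lebesgue_on {a<..<b}. g1 x = g2 x"
proof -
  obtain c1 where c1: "AE x in lebesgue_on {a<..<b}. u x = c1 + prim a g1 x" and L1: "L2 a b g1"
    using h1 unfolding has_wderiv_def by blast
  obtain c2 where c2: "AE x in lebesgue_on {a<..<b}. u x = c2 + prim a g2 x" and L2': "L2 a b g2"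
    using h2 unfolding has_wderiv_def by blast
  have i1: "integrable (lebesgue_on {a<..<b}) g1" by (rule L2_int[OF L1])
  have i2: "integrable (lebesgue_on {a<..<b}) g2" by (rule L2_int[OF L2'])
  have i12: "integrable (lebesgue_on {a<..<b}) (\<lambda>t. g1 t - g2 t)" using i1 i2 by simp
  define D where "D = prim a (\<lambda>t. g1 t - g2 t)"
  have Dx: "D x = prim a g1 x - prim a g2 x" if "x \<le> b" for x
    unfolding D_def by (rule prim_diff[OF i1 i2 that])
  have cD: "continuous_on {a..b} D" unfolding D_def by (rule prim_cont[OF i12])
  have ae: "AE x in lebesgue_on {a<..<b}. D x = c2 - c1"
    using c1 c2 AE_space
  proof eventually_elim
    case (elim x)
    then have "x \<le> b" by simp
    with elim show ?case using Dx by simp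
  qed
  have Deq: "D x = c2 - c1" if "x \<in> {a..b}" for x
    by (rule ae_cont_eq[OF ab cD _ ae that]) simp
  have "D a = 0" unfolding D_def by (rule prim_a)
  then have "c2 - c1 = 0" using Deq[of a] ab by simp
  then have pz: "prim a (\<lambda>t. g1 t - g2 t) x = 0" if "x \<in> {a<..<b}" for x
    using Deq[of x] that unfolding D_def by simp
  have "AE x in lebesgue_on {a<..<b}. g1 x - g2 x = 0" by (rule ae_zero_of_prim_zero[OF ab i12 pz])
  then show ?thesis by (rule AE_mp) (intro AE_I2, simp)
qed



lemma cont_L2:
  fixes f :: "real \<Rightarrow> real"
  assumes c: "continuous_on {a..b} f"
  shows "L2 a b f"
  unfolding L2_def
proof
  have "continuous_on {a<..<b} f" using c by (rule continuous_on_subset) auto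
  then show "f \<in> borel_measurable (lebesgue_on {a<..<b})"
    by (rule continuous_imp_measurable_on_sets_lebesgue) simp
  have "continuous_on {a..b} (\<lambda>x. (f x)^2)" using c by (intro continuous_intros)
  then have "integrable (lebesgue_on {a..b}) (\<lambda>x. (f x)^2)" by (rule continuous_imp_integrable_real)
  then show "integrable (lebesgue_on {a<..<b}) (\<lambda>x. (f x)^2)" using int_Ioo_Icc by blast
qed

lemma psi_deriv:
  fixes k c x :: real
  assumes "sin (k*(x-c)) \<noteq> 0"
  shows "((\<lambda>x. k * cos (k*(x-c)) / sin (k*(x-c))) has_real_derivative (- (k^2) / (sin (k*(x-c)))^2)) (at x)"
proof -
  have cc: "cos y * (cos y * z) = z - sin y * (sin y * z)" for y z :: real
  proof -
    have "cos y * (cos y * z) = (cos y)^2 * z" by (simp add: power2_eq_square)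
    also have "\<dots> = (1 - (sin y)^2) * z" by (simp add: cos_squared_eq)
    also have "\<dots> = z - sin y * (sin y * z)" by (simp add: power2_eq_square algebra_simps)
    finally show ?thesis .
  qed
  show ?thesis
    using assms by (auto intro!: derivative_eq_intros simp: field_simps power2_eq_square cc algebra_simps)
qed


lemma wirtinger_k:
  fixes g :: "real \<Rightarrow> real" and k :: real
  assumes ab: "a < b" and gL: "L2 a b g" and g0: "integral\<^sup>L (lebesgue_on {a<..<b}) g = 0"
    and k: "0 < k" "k * (b - a) < pi"
  shows "k^2 * ip a b (prim a g) (prim a g) \<le> ip a b g g"
proof -
  let ?M = "lebesgue_on {a<..<b}"
  define V where "V = prim a g"
  have gi: "integrable ?M g" by (rule L2_int[OF gL])
  have cV: "continuous_on {a..b} V" unfolding V_def by (rule prim_cont[OF gi])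
  have VL: "L2 a b V" by (rule cont_L2[OF cV])
  have Vb: "V b = 0" unfolding V_def using prim_b g0 by simp
  define \<delta> where "\<delta> = (pi / k - (b - a)) / 2"
  have "b - a < pi / k" using k by (simp add: field_simps)
  then have \<delta>pos: "\<delta> > 0" by (simp add: \<delta>_def)
  have k\<delta>: "k * \<delta> = (pi - k * (b - a)) / 2" using k by (simp add: \<delta>_def field_simps)
  define c where "c = a - \<delta>"
  have th: "0 < k * (x - c) \<and> k * (x - c) < pi" if "x \<in> {a..b}" for x
  proof -
    have e1: "k * (x - c) = k * (x - a) + k * \<delta>" by (simp add: c_def algebra_simps)
    have e2: "0 \<le> k * (x - a)" using that k by auto
    have e3: "k * (x - a) \<le> k * (b - a)" using that k by (intro mult_left_mono) auto
    have e4: "0 < k * \<delta>" using k \<delta>pos by simp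
    have p1: "0 < k * (x - c)" using e1 e2 e3 e4 k\<delta> k(2) by linarith
    have gen: "P < pi" if "P = Q + S" "Q \<le> R" "S = (pi - R) / 2" "R < pi" for P Q R S :: real
      using that by argo
    have p2: "k * (x - c) < pi" by (rule gen[OF e1 e3 k\<delta> k(2)])
    show ?thesis using p1 p2 by simp
  qed
  have sinpos: "sin (k * (x - c)) > 0" if "x \<in> {a..b}" for x
    using th[OF that] by (intro sin_gt_zero) auto
  define \<psi> where "\<psi> = (\<lambda>x. k * cos (k*(x-c)) / sin (k*(x-c)))"
  define \<psi>' where "\<psi>' = (\<lambda>x. - (k^2) / (sin (k*(x-c)))^2)"
  have d\<psi>: "(\<psi> has_real_derivative \<psi>' x) (at x)" if "x \<in> {a..b}" for x
    unfolding \<psi>_def \<psi>'_def by (rule psi_deriv) (use sinpos[OF that] in simp)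
  have c\<psi>: "continuous_on {a..b} \<psi>"
    unfolding \<psi>_def using sinpos by (auto intro!: continuous_intros simp: less_imp_neq[symmetric])
  have c\<psi>': "continuous_on {a..b} \<psi>'"
    unfolding \<psi>'_def using sinpos by (auto intro!: continuous_intros simp: less_imp_neq[symmetric])
  have key: "\<psi>' x + (\<psi> x)^2 = - (k^2)" if "x \<in> {a..b}" for x
  proof -
    have s: "sin (k*(x-c)) \<noteq> 0" using sinpos[OF that] by simp
    have cc2: "k * (k * (cos w * cos w)) + k * (k * (sin w * sin w)) = k * k" for w :: real
    proof -
      have "k * (k * (cos w * cos w)) + k * (k * (sin w * sin w)) = k * k * (cos w * cos w + sin w * sin w)" by (simp only: distrib_left mult.assoc)
      also have "\<dots> = k * k" by (simp only: sin_cos_squared_add3 mult_1_right)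
      finally show ?thesis .
    qed
    show ?thesis using s unfolding \<psi>_def \<psi>'_def by (simp add: field_simps power2_eq_square cc2)
  qed
  define W where "W = (\<lambda>t. g t * V t + V t * g t)"
  have Wi: "integrable ?M W" unfolding W_def using L2_prod_int[OF gL VL] L2_prod_int[OF VL gL] by simp
  have VV: "V x * V x = prim a W x" if "x \<le> b" for x
    unfolding V_def W_def by (rule prod_rule[OF gi gi that])
  have Wb: "prim a W b = 0" using VV[of b] Vb by simp
  have intW: "integral\<^sup>L ?M W = 0" using Wb prim_b by simp
  have \<Psi>: "prim a \<psi>' x = \<psi> x - \<psi> a" if "x \<in> {a..b}" for x
  proof (rule prim_FTC)
    show "a \<le> x" using that by simp
    show "(\<psi> has_real_derivative \<psi>' t) (at t)" if "t \<in> {a..x}" for t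
      using d\<psi> that \<open>x \<in> {a..b}\<close> by auto
    show "continuous_on {a..x} \<psi>'" using c\<psi>' by (rule continuous_on_subset) (use that in auto)
  qed
  have \<psi>'i: "integrable ?M \<psi>'" by (rule L2_int[OF cont_L2[OF c\<psi>']])
  have pr: "prim a \<psi>' b * prim a W b = prim a (\<lambda>t. \<psi>' t * prim a W t + prim a \<psi>' t * W t) b"
    by (rule prod_rule[OF \<psi>'i Wi]) simp
  have i1: "integrable ?M (\<lambda>t. \<psi>' t * (V t * V t))"
  proof -
    have "continuous_on {a..b} (\<lambda>t. \<psi>' t * (V t * V t))" using c\<psi>' cV by (intro continuous_intros)
    then show ?thesis by (rule L2_int[OF cont_L2])
  qed
  have \<psi>VL: "L2 a b (\<lambda>t. \<psi> t * V t)" by (rule cont_L2) (use c\<psi> cV in \<open>intro continuous_intros\<close>)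
  have i2: "integrable ?M (\<lambda>t. \<psi> t * W t)"
  proof -
    have "integrable ?M (\<lambda>t. 2 * (g t * (\<psi> t * V t)))" using L2_prod_int[OF gL \<psi>VL] by simp
    moreover have "(\<lambda>t. \<psi> t * W t) = (\<lambda>t. 2 * (g t * (\<psi> t * V t)))" by (auto simp: W_def fun_eq_iff algebra_simps)
    ultimately show ?thesis by simp
  qed
  have "0 = integral\<^sup>L ?M (\<lambda>t. \<psi>' t * prim a W t + prim a \<psi>' t * W t)"
    using pr Wb prim_b by simp
  also have "\<dots> = integral\<^sup>L ?M (\<lambda>t. \<psi>' t * (V t * V t) + (\<psi> t * W t - \<psi> a * W t))"
  proof (rule Bochner_Integration.integral_cong[OF refl])
    fix t assume "t \<in> space ?M"
    then have t: "t \<in> {a..b}" "t \<le> b" by auto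
    show "\<psi>' t * prim a W t + prim a \<psi>' t * W t = \<psi>' t * (V t * V t) + (\<psi> t * W t - \<psi> a * W t)"
      unfolding VV[OF t(2), symmetric] \<Psi>[OF t(1)] by (simp add: algebra_simps)
  qed
  also have "\<dots> = integral\<^sup>L ?M (\<lambda>t. \<psi>' t * (V t * V t)) + integral\<^sup>L ?M (\<lambda>t. \<psi> t * W t) - \<psi> a * integral\<^sup>L ?M W"
    using i1 i2 Wi by simp
  finally have A: "integral\<^sup>L ?M (\<lambda>t. \<psi>' t * (V t * V t)) + integral\<^sup>L ?M (\<lambda>t. \<psi> t * W t) = 0"
    using intW by simp
  have iVV: "integrable ?M (\<lambda>t. V t * V t)" by (rule L2_prod_int[OF VL VL])
  have igg: "integrable ?M (\<lambda>t. g t * g t)" by (rule L2_prod_int[OF gL gL])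
  have "0 \<le> integral\<^sup>L ?M (\<lambda>t. (g t - \<psi> t * V t)^2)"
    by (rule integral_nonneg_AE) simp
  also have "\<dots> = integral\<^sup>L ?M (\<lambda>t. g t * g t - k^2 * (V t * V t) - (\<psi>' t * (V t * V t) + \<psi> t * W t))"
  proof (rule Bochner_Integration.integral_cong[OF refl])
    fix t assume "t \<in> space ?M"
    then have t: "t \<in> {a..b}" by auto
    have "- (k^2) * (V t * V t) = (\<psi>' t + (\<psi> t)^2) * (V t * V t)" using key[OF t] by simp
    then show "(g t - \<psi> t * V t)^2 = g t * g t - k^2 * (V t * V t) - (\<psi>' t * (V t * V t) + \<psi> t * W t)"
      by (simp add: W_def power2_eq_square algebra_simps)
  qed
  also have "\<dots> = ip a b g g - k^2 * ip a b V V - (integral\<^sup>L ?M (\<lambda>t. \<psi>' t * (V t * V t)) + integral\<^sup>L ?M (\<lambda>t. \<psi> t * W t))"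
    using igg iVV i1 i2 by (simp add: ip_def)
  finally show ?thesis using A by (simp add: V_def)
qed

lemma wirtinger:
  fixes g :: "real \<Rightarrow> real"
  assumes ab: "a < b" and gL: "L2 a b g" and g0: "integral\<^sup>L (lebesgue_on {a<..<b}) g = 0"
  shows "(pi / (b - a))^2 * ip a b (prim a g) (prim a g) \<le> ip a b g g"
proof (rule ccontr)
  define K where "K = pi / (b - a)"
  define A where "A = ip a b (prim a g) (prim a g)"
  define B where "B = ip a b g g"
  assume "\<not> ?thesis"
  then have lt: "B < K^2 * A" by (simp add: K_def A_def B_def)
  have A0: "0 \<le> A" unfolding A_def by (rule ip_sq_nonneg)
  have B0: "0 \<le> B" unfolding B_def by (rule ip_sq_nonneg)
  have Kp: "K > 0" using ab by (simp add: K_def)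
  have Ap: "A > 0" using lt B0 A0 by (cases "A = 0") auto
  define k where "k = sqrt ((B / A + K^2) / 2)"
  have k2: "k^2 = (B / A + K^2) / 2" unfolding k_def using Ap B0 by (simp add: real_sqrt_pow2)
  have BA: "B / A < K^2" using lt Ap by (simp add: field_simps)
  have kpos: "k > 0" unfolding k_def using Ap B0 Kp by (simp add: divide_nonneg_pos add_nonneg_pos)
  have "k^2 < K^2" using k2 BA by simp
  then have kK: "k < K" using kpos Kp by (simp add: power_less_imp_less_base)
  have "k * (b - a) < pi" using kK ab by (simp add: K_def field_simps)
  from wirtinger_k[OF ab gL g0 kpos this]
  have "k^2 * A \<le> B" by (simp add: A_def B_def)
  moreover have "k^2 * A > B" using k2 BA Ap by (simp add: field_simps)
  ultimately show False by simp
qed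



lemma has_wderiv_wd: assumes "has_wderiv a b u g" shows "has_wderiv a b u (wd a b u)"
  unfolding wd_def using assms by (rule someI[where P="has_wderiv a b u"])

lemma ip_cong_ae:
  assumes f1: "f1 \<in> borel_measurable (lebesgue_on {a<..<b})" and g1: "g1 \<in> borel_measurable (lebesgue_on {a<..<b})"
    and ef: "AE x in lebesgue_on {a<..<b}. f1 x = f2 x" and eg: "AE x in lebesgue_on {a<..<b}. g1 x = g2 x"
  shows "ip a b f1 g1 = ip a b f2 g2"
proof -
  have f2: "f2 \<in> borel_measurable (lebesgue_on {a<..<b})" by (rule ae_measurable_transfer[OF f1 _ ef]) simp
  have g2: "g2 \<in> borel_measurable (lebesgue_on {a<..<b})" by (rule ae_measurable_transfer[OF g1 _ eg]) simp
  show ?thesis unfolding ip_def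
  proof (rule integral_cong_AE)
    show "(\<lambda>x. f1 x * g1 x) \<in> borel_measurable (lebesgue_on {a<..<b})" using f1 g1 by simp
    show "(\<lambda>x. f2 x * g2 x) \<in> borel_measurable (lebesgue_on {a<..<b})" using f2 g2 by simp
    show "AE x in lebesgue_on {a<..<b}. f1 x * g1 x = f2 x * g2 x" using ef eg by eventually_elim simp
  qed
qed

lemma H10_data:
  assumes ab: "a < b" and H: "H10 a b v"
  obtains g where "L2 a b g" "integral\<^sup>L (lebesgue_on {a<..<b}) g = 0"
    "AE x in lebesgue_on {a<..<b}. v x = prim a g x"
    "has_wderiv a b v (wd a b v)" "AE x in lebesgue_on {a<..<b}. wd a b v x = g x"
    "v \<in> borel_measurable (lebesgue_on {a<..<b})" "L2 a b v" "L2 a b (wd a b v)"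
    "ip a b v v = ip a b (prim a g) (prim a g)" "ip a b (wd a b v) (wd a b v) = ip a b g g"
proof -
  obtain g where gL: "L2 a b g" and g0: "integral\<^sup>L (lebesgue_on {a<..<b}) g = 0"
    and ae: "AE x in lebesgue_on {a<..<b}. v x = prim a g x"
    using H unfolding H10_def by blast
  have hw: "has_wderiv a b v g" unfolding has_wderiv_def using gL ae by (intro conjI exI[of _ 0]) auto
  have hwd: "has_wderiv a b v (wd a b v)" by (rule has_wderiv_wd[OF hw])
  have wdg: "AE x in lebesgue_on {a<..<b}. wd a b v x = g x" by (rule wderiv_unique[OF ab hwd hw])
  have gi: "integrable (lebesgue_on {a<..<b}) g" by (rule L2_int[OF gL])
  have VL: "L2 a b (prim a g)" by (rule cont_L2[OF prim_cont[OF gi]])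
  have Vm: "prim a g \<in> borel_measurable (lebesgue_on {a<..<b})" using VL by (simp add: L2_def)
  have ae': "AE x in lebesgue_on {a<..<b}. prim a g x = v x" using ae by (rule AE_mp) (intro AE_I2, simp)
  have vm: "v \<in> borel_measurable (lebesgue_on {a<..<b})" by (rule ae_measurable_transfer[OF Vm _ ae']) simp
  have vL: "L2 a b v"
    unfolding L2_def
  proof
    show "v \<in> borel_measurable (lebesgue_on {a<..<b})" by (rule vm)
    have "integrable (lebesgue_on {a<..<b}) (\<lambda>x. (prim a g x)^2)" using VL by (simp add: L2_def)
    then show "integrable (lebesgue_on {a<..<b}) (\<lambda>x. (v x)^2)"
    proof (rule integrable_cong_AE_imp)
      show "(\<lambda>x. (v x)^2) \<in> borel_measurable (lebesgue_on {a<..<b})" using vm by simp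
      show "AE x in lebesgue_on {a<..<b}. (prim a g x)^2 = (v x)^2" using ae' by eventually_elim simp
    qed
  qed
  have wL: "L2 a b (wd a b v)" using hwd by (simp add: has_wderiv_def)
  have "ip a b v v = ip a b (prim a g) (prim a g)" by (rule ip_cong_ae[OF vm vm ae ae])
  moreover have "ip a b (wd a b v) (wd a b v) = ip a b g g"
    by (rule ip_cong_ae[OF _ _ wdg wdg]) (use wL in \<open>simp_all add: L2_def\<close>)
  ultimately show ?thesis using that gL g0 ae hwd wdg vm vL wL by blast
qed

lemma poincare:
  assumes ab: "a < b" and H: "H10 a b v"
  shows "(pi / (b - a))^2 * ip a b v v \<le> ip a b (wd a b v) (wd a b v)"
proof -
  obtain g where gL: "L2 a b g" and g0: "integral\<^sup>L (lebesgue_on {a<..<b}) g = 0"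
    and e1: "ip a b v v = ip a b (prim a g) (prim a g)" and e2: "ip a b (wd a b v) (wd a b v) = ip a b g g"
    using H10_data[OF ab H] by metis
  show ?thesis unfolding e1 e2 by (rule wirtinger[OF ab gL g0])
qed



lemma eig_lower:
  assumes ab: "a < b" and E: "is_eigenvalue_A a b l"
  shows "(pi / (b - a))^2 \<le> l"
proof -
  let ?M = "lebesgue_on {a<..<b}"
  obtain u where dA: "domA a b u" and nz: "\<not> (AE x in ?M. u x = 0)"
    and eig: "AE x in ?M. opA a b u x = l * u x"
    using E unfolding is_eigenvalue_A_def by blast
  have H: "H10 a b u" and H1w: "H1 a b (wd a b u)" using dA by (auto simp: domA_def)
  obtain g0 where g0L: "L2 a b g0" and g00: "integral\<^sup>L ?M g0 = 0"
    and uV: "AE x in ?M. u x = prim a g0 x" and wdg: "AE x in ?M. wd a b u x = g0 x"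
    and e1: "ip a b u u = ip a b (prim a g0) (prim a g0)"
    using H10_data[OF ab H] by metis
  obtain h' where "has_wderiv a b (wd a b u) h'" using H1w unfolding H1_def by blast
  then have hw: "has_wderiv a b (wd a b u) (wd a b (wd a b u))" by (rule has_wderiv_wd)
  define h where "h = wd a b (wd a b u)"
  obtain c where hL: "L2 a b h" and wW: "AE x in ?M. wd a b u x = c + prim a h x"
    using hw unfolding has_wderiv_def h_def by blast
  define V where "V = prim a g0"
  define W where "W = prim a h"
  have g0i: "integrable ?M g0" by (rule L2_int[OF g0L])
  have hi: "integrable ?M h" by (rule L2_int[OF hL])
  have VL: "L2 a b V" unfolding V_def by (rule cont_L2[OF prim_cont[OF g0i]])
  have WL: "L2 a b W" unfolding W_def by (rule cont_L2[OF prim_cont[OF hi]])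
  have Vb: "V b = 0" unfolding V_def using prim_b g00 by simp
  have aeg: "AE x in ?M. g0 x = c + W x" using wdg wW by eventually_elim (simp add: W_def)
  have aeh: "AE x in ?M. h x = - l * V x"
    using eig uV by eventually_elim (simp add: opA_def h_def V_def)
  have pr: "V b * W b = prim a (\<lambda>t. g0 t * W t + V t * h t) b"
    unfolding V_def W_def by (rule prod_rule[OF g0i hi]) simp
  have i1: "integrable ?M (\<lambda>t. g0 t * W t)" by (rule L2_prod_int[OF g0L WL])
  have i2: "integrable ?M (\<lambda>t. V t * h t)" by (rule L2_prod_int[OF VL hL])
  have "0 = integral\<^sup>L ?M (\<lambda>t. g0 t * W t + V t * h t)" using pr Vb prim_b by simp
  also have "\<dots> = integral\<^sup>L ?M (\<lambda>t. g0 t * W t) + integral\<^sup>L ?M (\<lambda>t. V t * h t)" using i1 i2 by simp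
  finally have S: "integral\<^sup>L ?M (\<lambda>t. g0 t * W t) + integral\<^sup>L ?M (\<lambda>t. V t * h t) = 0" by simp
  have mg0: "g0 \<in> borel_measurable ?M" using g0L by (simp add: L2_def)
  have mV: "V \<in> borel_measurable ?M" using VL by (simp add: L2_def)
  have mW: "W \<in> borel_measurable ?M" using WL by (simp add: L2_def)
  have mh: "h \<in> borel_measurable ?M" using hL by (simp add: L2_def)
  have "ip a b g0 g0 = integral\<^sup>L ?M (\<lambda>t. g0 t * (c + W t))"
    unfolding ip_def
  proof (rule integral_cong_AE)
    show "(\<lambda>t. g0 t * g0 t) \<in> borel_measurable ?M" using mg0 by simp
    show "(\<lambda>t. g0 t * (c + W t)) \<in> borel_measurable ?M" using mg0 mW by simp
    show "AE t in ?M. g0 t * g0 t = g0 t * (c + W t)" using aeg by eventually_elim simp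
  qed
  also have "\<dots> = c * integral\<^sup>L ?M g0 + integral\<^sup>L ?M (\<lambda>t. g0 t * W t)"
    using g0i i1 by (simp add: distrib_left)
  finally have G: "ip a b g0 g0 = integral\<^sup>L ?M (\<lambda>t. g0 t * W t)" using g00 by simp
  have "integral\<^sup>L ?M (\<lambda>t. V t * h t) = integral\<^sup>L ?M (\<lambda>t. - l * (V t * V t))"
  proof (rule integral_cong_AE)
    show "(\<lambda>t. V t * h t) \<in> borel_measurable ?M" using mV mh by simp
    show "(\<lambda>t. - l * (V t * V t)) \<in> borel_measurable ?M" using mV by simp
    show "AE t in ?M. V t * h t = - l * (V t * V t)" using aeh by eventually_elim simp
  qed
  also have "\<dots> = - l * ip a b V V" by (simp add: ip_def)
  finally have Hh: "integral\<^sup>L ?M (\<lambda>t. V t * h t) = - l * ip a b V V" .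
  have key: "ip a b g0 g0 = l * ip a b V V" using S G Hh by simp
  have pos: "ip a b V V > 0"
  proof (rule ccontr)
    assume "\<not> ip a b V V > 0"
    then have z: "ip a b V V = 0" using ip_sq_nonneg[of a b V] by simp
    have "AE x in ?M. V x * V x = 0"
      using z unfolding ip_def by (subst (asm) integral_nonneg_eq_0_iff_AE) (use L2_prod_int[OF VL VL] in auto)
    then have "AE x in ?M. u x = 0" using uV by eventually_elim (simp add: V_def)
    with nz show False by simp
  qed
  have "(pi / (b - a))^2 * ip a b V V \<le> ip a b g0 g0" unfolding V_def by (rule wirtinger[OF ab g0L g00])
  then have "(pi / (b - a))^2 * ip a b V V \<le> l * ip a b V V" using key by simp
  then show ?thesis using pos by simp
qed



lemma eig_sin:
  assumes ab: "a < b"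
  shows "is_eigenvalue_A a b ((pi / (b - a))^2)"
proof -
  let ?M = "lebesgue_on {a<..<b}"
  define K where "K = pi / (b - a)"
  have Kp: "K > 0" using ab by (simp add: K_def)
  have KL: "K * (b - a) = pi" using ab by (simp add: K_def)
  define u where "u = (\<lambda>x. sin (K * (x - a)))"
  define g where "g = (\<lambda>x. K * cos (K * (x - a)))"
  define h where "h = (\<lambda>x. - (K^2) * sin (K * (x - a)))"
  have du: "(u has_real_derivative g x) (at x)" for x
    unfolding u_def g_def by (auto intro!: derivative_eq_intros)
  have dg: "(g has_real_derivative h x) (at x)" for x
    unfolding g_def h_def by (auto intro!: derivative_eq_intros simp: power2_eq_square)
  have cg: "continuous_on {a..b} g" unfolding g_def by (intro continuous_intros)
  have ch: "continuous_on {a..b} h" unfolding h_def by (intro continuous_intros)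
  have pg: "prim a g x = u x" if "x \<in> {a..b}" for x
    using prim_FTC[of a x u g] du that continuous_on_subset[OF cg, of "{a..x}"] by (simp add: u_def)
  have ph: "prim a h x = g x - K" if "x \<in> {a..b}" for x
    using prim_FTC[of a x g h] dg that continuous_on_subset[OF ch, of "{a..x}"] by (simp add: g_def)
  have gL: "L2 a b g" by (rule cont_L2[OF cg])
  have hL: "L2 a b h" by (rule cont_L2[OF ch])
  have g0: "integral\<^sup>L ?M g = 0" using prim_b[of a g b] pg[of b] ab KL by (simp add: u_def)
  have aeu: "AE x in ?M. u x = prim a g x" by (rule AE_I2) (use pg in auto)
  have H: "H10 a b u" unfolding H10_def using gL g0 aeu by blast
  have hwg: "has_wderiv a b u g" unfolding has_wderiv_def using gL aeu by (intro conjI exI[of _ 0]) auto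
  have hwd: "has_wderiv a b u (wd a b u)" by (rule has_wderiv_wd[OF hwg])
  have wdg: "AE x in ?M. wd a b u x = g x" by (rule wderiv_unique[OF ab hwd hwg])
  have hwh: "has_wderiv a b (wd a b u) h"
    unfolding has_wderiv_def
  proof (intro conjI exI[of _ K])
    show "L2 a b h" by (rule hL)
    show "AE x in ?M. wd a b u x = K + prim a h x"
      using wdg AE_space by eventually_elim (use ph in auto)
  qed
  have H1: "H1 a b (wd a b u)" unfolding H1_def using hwh by blast
  have hw2: "has_wderiv a b (wd a b u) (wd a b (wd a b u))" by (rule has_wderiv_wd[OF hwh])
  have wwh: "AE x in ?M. wd a b (wd a b u) x = h x" by (rule wderiv_unique[OF ab hw2 hwh])
  have dA: "domA a b u" unfolding domA_def using H H1 by simp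
  have eig: "AE x in ?M. opA a b u x = K^2 * u x"
    using wwh by eventually_elim (simp add: opA_def h_def u_def)
  have nz: "\<not> (AE x in ?M. u x = 0)"
  proof
    assume "AE x in ?M. u x = 0"
    moreover have "AE x in ?M. u x > 0"
    proof (rule AE_I2)
      fix x assume "x \<in> space ?M"
      then have x: "a < x" "x < b" by auto
      have "0 < K * (x - a)" using x Kp by simp
      moreover have "K * (x - a) < pi" using x Kp KL by (metis diff_strict_right_mono mult_strict_left_mono)
      ultimately show "u x > 0" unfolding u_def by (rule sin_gt_zero)
    qed
    ultimately have "AE x in ?M. False" by eventually_elim simp
    then have "ae_filter ?M = bot" using trivial_limit_def by blast
    then have "emeasure ?M (space ?M) = 0" by (simp add: ae_filter_eq_bot_iff)
    moreover have "emeasure ?M (space ?M) = ennreal (b - a)"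
      using ab by (simp add: emeasure_restrict_space)
    ultimately show False using ab by simp
  qed
  show ?thesis unfolding is_eigenvalue_A_def K_def[symmetric] using dA nz eig by blast
qed

lemma lambda1_eq:
  assumes ab: "a < b"
  shows "lambda1 a b = (pi / (b - a))^2"
  unfolding lambda1_def
  by (rule cInf_eq_minimum) (use eig_sin[OF ab] eig_lower[OF ab] in auto)



lemma final_arith:
  fixes P Y w \<alpha> \<epsilon> :: real
  assumes P: "0 \<le> P" and Y: "\<bar>Y\<bar> \<le> w * P" and w: "0 < w" and al: "0 < \<alpha>" "\<alpha> < \<epsilon>"
    and ep: "\<epsilon> < 1 / (2 * w)"
  shows "P - \<alpha> * Y \<le> (P - \<epsilon> * Y) / (1 - w * \<epsilon>) \<and> (P - \<epsilon> * Y) / (1 - w * \<epsilon>) \<le> (P - \<alpha> * Y) / (1 - 2 * w * \<epsilon>)"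
proof -
  have we: "w * \<epsilon> < 1 / 2" using ep w by (simp add: field_simps)
  have e0: "0 < \<epsilon>" using al by simp
  have we0: "0 < w * \<epsilon>" using w e0 by simp
  define D where "D = 1 - w * \<epsilon>"
  define D2 where "D2 = 1 - 2 * w * \<epsilon>"
  have D: "D > 0" using we by (simp add: D_def)
  have D2: "D2 > 0" using we by (simp add: D2_def)
  define c1 where "c1 = \<epsilon> - \<alpha> + w * \<epsilon> * \<alpha>"
  have c10: "0 \<le> c1" using al we0 by (simp add: c1_def)
  have c1e: "c1 \<le> \<epsilon>"
  proof -
    have "w * \<epsilon> * \<alpha> \<le> 1 * \<alpha>" using we al by (intro mult_right_mono) auto
    then show ?thesis by (simp add: c1_def)
  qed
  have "c1 * Y \<le> c1 * \<bar>Y\<bar>" using c10 by (simp add: mult_left_mono)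
  also have "\<dots> \<le> c1 * (w * P)" using c10 Y by (simp add: mult_left_mono)
  also have "\<dots> \<le> \<epsilon> * (w * P)" using c1e w P by (simp add: mult_right_mono)
  finally have k1: "c1 * Y \<le> w * \<epsilon> * P" by (simp add: algebra_simps)
  have "D * (P - \<alpha> * Y) = P - \<epsilon> * Y + (c1 * Y - w * \<epsilon> * P)"
    by (simp add: D_def c1_def algebra_simps)
  then have "D * (P - \<alpha> * Y) \<le> P - \<epsilon> * Y" using k1 by simp
  then have p1: "P - \<alpha> * Y \<le> (P - \<epsilon> * Y) / D" using D by (simp add: pos_le_divide_eq mult.commute)
  define c2 where "c2 = \<epsilon> - \<alpha> - w * \<epsilon> * (2 * \<epsilon> - \<alpha>)"
  have c2a: "c2 \<le> \<epsilon>"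
  proof -
    have "0 \<le> w * \<epsilon> * (2 * \<epsilon> - \<alpha>)" using we0 al by simp
    then show ?thesis using al by (simp add: c2_def)
  qed
  have c2b: "- \<epsilon> \<le> c2"
  proof -
    have "0 \<le> (2 * \<epsilon> - \<alpha>) * (1 - w * \<epsilon>)" using al we by simp
    then show ?thesis by (simp add: c2_def algebra_simps)
  qed
  have "- (\<epsilon> * (w * P)) \<le> - (\<bar>c2\<bar> * \<bar>Y\<bar>)"
  proof -
    have "\<bar>c2\<bar> \<le> \<epsilon>" using c2a c2b by simp
    then have "\<bar>c2\<bar> * \<bar>Y\<bar> \<le> \<epsilon> * (w * P)" using Y e0 by (intro mult_mono) auto
    then show ?thesis by simp
  qed
  also have "- (\<bar>c2\<bar> * \<bar>Y\<bar>) \<le> c2 * Y"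
    by (metis abs_ge_minus_self abs_mult minus_le_iff)
  finally have k2: "0 \<le> w * \<epsilon> * P + c2 * Y" by (simp add: algebra_simps)
  have "(P - \<alpha> * Y) * D - (P - \<epsilon> * Y) * D2 = w * \<epsilon> * P + c2 * Y"
    by (simp add: D_def D2_def c2_def algebra_simps)
  then have "(P - \<epsilon> * Y) * D2 \<le> (P - \<alpha> * Y) * D" using k2 by simp
  then have p2: "(P - \<epsilon> * Y) / D \<le> (P - \<alpha> * Y) / D2" using D D2 by (simp add: frac_le_eq divide_le_0_iff mult_nonneg_nonneg field_simps)
  show ?thesis using p1 p2 by (simp add: D_def D2_def)
qed


lemma norm1_sq: "(norm1 a b v)^2 = ip a b (wd a b v) (wd a b v)"
  by (simp add: norm1_def ip_sq_nonneg)

lemma ip1_bound: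
  assumes ab: "a < b" and Hu: "H10 a b u" and Hv: "H10 a b v" and t: "t > 0"
  shows "2 * \<bar>ip1 a b u v\<bar> \<le> t * tnorm1_sq a b u + (1 + 1 / lambda1 a b) * (norm1 a b v)^2 / t"
proof -
  obtain g where uL: "L2 a b u" and uL': "L2 a b (wd a b u)" using H10_data[OF ab Hu] by metis
  obtain g' where vL: "L2 a b v" and vL': "L2 a b (wd a b v)" using H10_data[OF ab Hv] by metis
  define K where "K = pi / (b - a)"
  have Kp: "K > 0" using ab by (simp add: K_def)
  have l1: "lambda1 a b = K^2" using lambda1_eq[OF ab] by (simp add: K_def)
  have P: "K^2 * ip a b v v \<le> ip a b (wd a b v) (wd a b v)" using poincare[OF ab Hv] by (simp add: K_def)
  have P': "ip a b v v \<le> (norm1 a b v)^2 / lambda1 a b"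
    using P Kp unfolding l1 norm1_sq by (simp add: field_simps)
  have A1: "2 * \<bar>ip a b u v\<bar> \<le> t * ip a b u u + ip a b v v / t" by (rule ip_amgm[OF uL vL t])
  have A2: "2 * \<bar>ip a b (wd a b u) (wd a b v)\<bar> \<le> t * ip a b (wd a b u) (wd a b u) + ip a b (wd a b v) (wd a b v) / t"
    by (rule ip_amgm[OF uL' vL' t])
  have "2 * \<bar>ip1 a b u v\<bar> \<le> 2 * \<bar>ip a b u v\<bar> + 2 * \<bar>ip a b (wd a b u) (wd a b v)\<bar>"
    unfolding ip1_def using abs_triangle_ineq[of "ip a b u v" "ip a b (wd a b u) (wd a b v)"] by (smt (verit))
  also have "\<dots> \<le> t * tnorm1_sq a b u + (ip a b v v + (norm1 a b v)^2) / t"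
    using A1 A2 unfolding tnorm1_sq_def norm1_sq by (simp add: algebra_simps add_divide_distrib)
  also have "\<dots> \<le> t * tnorm1_sq a b u + ((norm1 a b v)^2 / lambda1 a b + (norm1 a b v)^2) / t"
    using P' t by (simp add: divide_right_mono)
  also have "\<dots> = t * tnorm1_sq a b u + (1 + 1 / lambda1 a b) * (norm1 a b v)^2 / t"
    by (simp add: algebra_simps add_divide_distrib)
  finally show ?thesis .
qed

lemma T1_point:
  assumes ab: "a < b" and FL: "L2 a b F" and Hv: "H10 a b v" and k: "k > 0"
  shows "\<bar>ip a b F (wd a b v)\<bar> \<le> ip a b F F / k + k / 4 * (norm1 a b v)^2"
proof -
  obtain g' where vL': "L2 a b (wd a b v)" using H10_data[OF ab Hv] by metis
  have "2 * \<bar>ip a b F (wd a b v)\<bar> \<le> (2 / k) * ip a b F F + ip a b (wd a b v) (wd a b v) / (2 / k)"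
    by (rule ip_amgm[OF FL vL']) (use k in simp)
  then show ?thesis using k unfolding norm1_sq by (simp add: field_simps)
qed



theorem lemma6p1:
  fixes a b :: real and f \<mu> :: "real \<Rightarrow> real"
    and \<alpha> \<epsilon> :: real and z :: "(real \<Rightarrow> real) \<times> (real \<Rightarrow> real \<Rightarrow> real)"
  assumes ab: "a < b"
    and f: "L2 a b f"
    and mu_nonneg: "\<forall>s>0. \<mu> s \<ge> 0"
    and mu_nonzero: "\<exists>s>0. \<mu> s \<noteq> 0"
    and mu_noninc: "\<forall>s t. 0 < s \<and> s \<le> t \<longrightarrow> \<mu> t \<le> \<mu> s"
    and mu_ac: "abs_cont_pos \<mu>"
    and mu_int: "integrable (lebesgue_on {0<..}) \<mu>"
    and kappa_pos: "kappa \<mu> > 0"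
    and mu_moment_int: "integrable (lebesgue_on {0<..}) (\<lambda>s. s * \<mu> s)"
    and mu_moment: "integral\<^sup>L (lebesgue_on {0<..}) (\<lambda>s. s * \<mu> s) = 1"
    and mu_lim0: "\<exists>L. (\<mu> \<longlongrightarrow> L) (at_right 0)"
    and mu_decay: "\<exists>\<delta>>0. AE s in lebesgue_on {0<..}.
                     \<exists>d. (\<mu> has_real_derivative d) (at s) \<and> d + \<delta> * \<mu> s \<le> 0"
    and eps: "0 < \<alpha>" "\<alpha> < \<epsilon>" "\<epsilon> < 1 / (2 * omega a b)"
    and z: "inH a b \<mu> z"
  shows "Lambda a b f \<mu> \<alpha> z \<le> Lambda a b f \<mu> \<epsilon> z / (1 - omega a b * \<epsilon>)
       \<and> Lambda a b f \<mu> \<epsilon> z / (1 - omega a b * \<epsilon>)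
           \<le> Lambda a b f \<mu> \<alpha> z / (1 - 2 * omega a b * \<epsilon>)"
proof -
  let ?S = "lebesgue_on {0<..} :: real measure"
  obtain u \<eta> where zeq: "z = (u, \<eta>)" by (cases z)
  have Hu: "H10 a b u" using z by (simp add: inH_def zeq)
  have inM: "inM a b \<mu> \<eta>" using z by (simp add: inH_def zeq)
  have aeH: "AE s in ?S. H10 a b (\<eta> s)" using inM by (simp add: inM_def)
  have Mi: "integrable ?S (\<lambda>s. \<mu> s * (norm1 a b (\<eta> s))^2)" using inM by (simp add: inM_def)
  define \<kappa> where "\<kappa> = kappa \<mu>"
  have kp: "\<kappa> > 0" using kappa_pos by (simp add: \<kappa>_def)
  have kint: "integral\<^sup>L ?S \<mu> = \<kappa>" by (simp add: \<kappa>_def kappa_def)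
  define l1 where "l1 = lambda1 a b"
  have l1p: "l1 > 0" using lambda1_eq[OF ab] ab by (simp add: l1_def)
  define w where "w = omega a b"
  have wsq: "w^2 = 1 + 1 / l1" using l1p by (simp add: w_def omega_def l1_def[symmetric] field_simps)
  have wp: "w > 0" using l1p by (simp add: w_def omega_def l1_def[symmetric])
  define F where "F = prim a f"
  have FL: "L2 a b F" unfolding F_def by (rule cont_L2[OF prim_cont[OF L2_int[OF f]]])
  define U where "U = tnorm1_sq a b u"
  define M where "M = normM_sq a b \<mu> \<eta>"
  define T1 where "T1 = integral\<^sup>L ?S (\<lambda>s. \<mu> s * ip a b F (wd a b (\<eta> s)))"
  define T2 where "T2 = ip a b F F"
  define X where "X = integral\<^sup>L ?S (\<lambda>s. \<mu> s * ip1 a b u (\<eta> s))"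
  have U0: "0 \<le> U" unfolding U_def tnorm1_sq_def using ip_sq_nonneg[of a b u] by simp
  have T20: "0 \<le> T2" unfolding T2_def by (rule ip_sq_nonneg)
  have mu0: "AE s in ?S. 0 \<le> \<mu> s" by (rule AE_I2) (use mu_nonneg in auto)
  have M0: "0 \<le> M" unfolding M_def normM_sq_def
    by (rule integral_nonneg_AE) (use mu0 in \<open>eventually_elim, simp\<close>)
  have b1: "AE s in ?S. \<bar>\<mu> s * ip a b F (wd a b (\<eta> s))\<bar> \<le> \<mu> s * (T2 / \<kappa> + \<kappa> / 4 * (norm1 a b (\<eta> s))^2)"
    using aeH mu0
  proof eventually_elim
    case (elim s)
    have "\<bar>ip a b F (wd a b (\<eta> s))\<bar> \<le> T2 / \<kappa> + \<kappa> / 4 * (norm1 a b (\<eta> s))^2"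
      unfolding T2_def by (rule T1_point[OF ab FL elim(1) kp])
    then show ?case using elim(2) by (simp add: abs_mult mult_left_mono)
  qed
  have R1i: "integrable ?S (\<lambda>s. \<mu> s * (T2 / \<kappa> + \<kappa> / 4 * (norm1 a b (\<eta> s))^2))"
    using mu_int Mi by (simp add: distrib_left algebra_simps)
  have R1v: "integral\<^sup>L ?S (\<lambda>s. \<mu> s * (T2 / \<kappa> + \<kappa> / 4 * (norm1 a b (\<eta> s))^2)) = T2 + \<kappa> / 4 * M"
  proof -
    have "integral\<^sup>L ?S (\<lambda>s. \<mu> s * (T2 / \<kappa> + \<kappa> / 4 * (norm1 a b (\<eta> s))^2))
        = integral\<^sup>L ?S (\<lambda>s. T2 / \<kappa> * \<mu> s + \<kappa> / 4 * (\<mu> s * (norm1 a b (\<eta> s))^2))"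
      by (simp add: algebra_simps)
    also have "\<dots> = T2 / \<kappa> * integral\<^sup>L ?S \<mu> + \<kappa> / 4 * M"
      using mu_int Mi by (simp add: M_def normM_sq_def)
    finally show ?thesis using kint kp by simp
  qed
  have T1b: "\<bar>T1\<bar> \<le> T2 + \<kappa> / 4 * M"
  proof (cases "integrable ?S (\<lambda>s. \<mu> s * ip a b F (wd a b (\<eta> s)))")
    case True
    have "\<bar>T1\<bar> \<le> integral\<^sup>L ?S (\<lambda>s. \<bar>\<mu> s * ip a b F (wd a b (\<eta> s))\<bar>)"
      unfolding T1_def by (rule integral_abs_bound)
    also have "\<dots> \<le> integral\<^sup>L ?S (\<lambda>s. \<mu> s * (T2 / \<kappa> + \<kappa> / 4 * (norm1 a b (\<eta> s))^2))"
      by (rule integral_mono_AE[OF _ R1i b1]) (use True in simp)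
    finally show ?thesis using R1v by simp
  next
    case False
    then have "T1 = 0" unfolding T1_def by (rule not_integrable_integral_eq)
    then show ?thesis using T20 M0 kp by simp
  qed
  define r where "r = sqrt \<kappa>"
  have rp: "r > 0" using kp by (simp add: r_def)
  have r2: "r * r = \<kappa>" using kp by (simp add: r_def)
  define t where "t = w / r"
  have tp: "t > 0" using wp rp by (simp add: t_def)
  have b2: "AE s in ?S. \<bar>\<mu> s * ip1 a b u (\<eta> s)\<bar> \<le> \<mu> s * ((t * U + w^2 * (norm1 a b (\<eta> s))^2 / t) / 2)"
    using aeH mu0
  proof eventually_elim
    case (elim s)
    have "2 * \<bar>ip1 a b u (\<eta> s)\<bar> \<le> t * tnorm1_sq a b u + (1 + 1 / lambda1 a b) * (norm1 a b (\<eta> s))^2 / t"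
      by (rule ip1_bound[OF ab Hu elim(1) tp])
    then have "\<bar>ip1 a b u (\<eta> s)\<bar> \<le> (t * U + w^2 * (norm1 a b (\<eta> s))^2 / t) / 2"
      using wsq by (simp add: U_def l1_def)
    then have "\<mu> s * \<bar>ip1 a b u (\<eta> s)\<bar> \<le> \<mu> s * ((t * U + w^2 * (norm1 a b (\<eta> s))^2 / t) / 2)"
      by (rule mult_left_mono[OF _ elim(2)])
    then show ?case by (simp add: abs_mult abs_of_nonneg[OF elim(2)])
  qed
  have R2i: "integrable ?S (\<lambda>s. \<mu> s * ((t * U + w^2 * (norm1 a b (\<eta> s))^2 / t) / 2))"
  proof -
    have "integrable ?S (\<lambda>s. (t * U / 2) * \<mu> s + (w^2 / t / 2) * (\<mu> s * (norm1 a b (\<eta> s))^2))"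
      using mu_int Mi by simp
    moreover have "(\<lambda>s. (t * U / 2) * \<mu> s + (w^2 / t / 2) * (\<mu> s * (norm1 a b (\<eta> s))^2))
       = (\<lambda>s. \<mu> s * ((t * U + w^2 * (norm1 a b (\<eta> s))^2 / t) / 2))"
      by (simp add: fun_eq_iff algebra_simps add_divide_distrib)
    ultimately show ?thesis by simp
  qed
  have R2v: "integral\<^sup>L ?S (\<lambda>s. \<mu> s * ((t * U + w^2 * (norm1 a b (\<eta> s))^2 / t) / 2)) = (t * U * \<kappa> + w^2 * M / t) / 2"
  proof -
    have "integral\<^sup>L ?S (\<lambda>s. \<mu> s * ((t * U + w^2 * (norm1 a b (\<eta> s))^2 / t) / 2))
        = integral\<^sup>L ?S (\<lambda>s. (t * U / 2) * \<mu> s + (w^2 / t / 2) * (\<mu> s * (norm1 a b (\<eta> s))^2))"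
      by (rule Bochner_Integration.integral_cong[OF refl]) (simp add: algebra_simps add_divide_distrib)
    also have "\<dots> = (t * U / 2) * integral\<^sup>L ?S \<mu> + (w^2 / t / 2) * M"
      using mu_int Mi by (simp add: M_def normM_sq_def)
    finally show ?thesis using kint by (simp add: algebra_simps add_divide_distrib)
  qed
  have Xb: "\<bar>X\<bar> \<le> (t * U * \<kappa> + w^2 * M / t) / 2"
  proof (cases "integrable ?S (\<lambda>s. \<mu> s * ip1 a b u (\<eta> s))")
    case True
    have "\<bar>X\<bar> \<le> integral\<^sup>L ?S (\<lambda>s. \<bar>\<mu> s * ip1 a b u (\<eta> s)\<bar>)"
      unfolding X_def by (rule integral_abs_bound)
    also have "\<dots> \<le> integral\<^sup>L ?S (\<lambda>s. \<mu> s * ((t * U + w^2 * (norm1 a b (\<eta> s))^2 / t) / 2))"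
      by (rule integral_mono_AE[OF _ R2i b2]) (use True in simp)
    finally show ?thesis using R2v by simp
  next
    case False
    then have "X = 0" unfolding X_def by (rule not_integrable_integral_eq)
    then show ?thesis using U0 M0 kp tp by simp
  qed
  have tk: "t * \<kappa> = w * r" unfolding t_def using rp r2[symmetric] by (simp add: field_simps)
  have wt: "w^2 / t = w * r" unfolding t_def using rp wp by (simp add: field_simps power2_eq_square)
  have Xb2: "\<bar>X / r\<bar> \<le> w * (U + M) / 2"
  proof -
    have e1: "t * U * \<kappa> = (t * \<kappa>) * U" by simp
    have e2: "w^2 * M / t = (w^2 / t) * M" by simp
    have "\<bar>X\<bar> \<le> (w * r * U + w * r * M) / 2" using Xb unfolding e1 e2 tk wt .
    then show ?thesis using rp by (simp add: field_simps abs_divide)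
  qed
  define P where "P = U + M + 2 / \<kappa> * T1 + 2 / \<kappa> * T2"
  define Y where "Y = X / r"
  have LamE: "Lambda a b f \<mu> e z = P - e * Y" for e
    by (simp add: Lambda_def Let_def zeq normH_sq_def P_def Y_def U_def M_def T1_def T2_def X_def F_def
        \<kappa>_def r_def)
  have PU: "U + M / 2 \<le> P"
  proof -
    have "- (2 / \<kappa> * T1) \<le> 2 / \<kappa> * \<bar>T1\<bar>" using kp by (simp add: abs_if)
    also have "\<dots> \<le> 2 / \<kappa> * (T2 + \<kappa> / 4 * M)" by (rule mult_left_mono[OF T1b]) (use kp in simp)
    also have "\<dots> = 2 / \<kappa> * T2 + M / 2" using kp by (simp add: field_simps)
    finally show ?thesis unfolding P_def by simp
  qed
  have P0: "0 \<le> P" using PU U0 M0 by simp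
  have YP: "\<bar>Y\<bar> \<le> w * P"
  proof -
    have "w * (U + M) / 2 \<le> w * (U + M / 2)" using wp U0 by (simp add: field_simps)
    also have "\<dots> \<le> w * P" using PU wp by (simp add: mult_left_mono)
    finally have "w * (U + M) / 2 \<le> w * P" .
    with Xb2 show ?thesis unfolding Y_def by linarith
  qed
  have "P - \<alpha> * Y \<le> (P - \<epsilon> * Y) / (1 - w * \<epsilon>) \<and> (P - \<epsilon> * Y) / (1 - w * \<epsilon>) \<le> (P - \<alpha> * Y) / (1 - 2 * w * \<epsilon>)"
    by (rule final_arith[OF P0 YP wp eps(1,2)]) (use eps(3) in \<open>simp add: w_def\<close>)
  then show ?thesis by (simp add: LamE w_def)
qed


end
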